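(* Let $s,k$ be integers with $2\le s\le k$ and let $q$ be a prime power. If $q=2$, then \[b_q(k,s)\le \frac{s(k-s)+s+2}{\log_q\frac{q^s}{q^s-1}}+1.\] If $q\ge 3$, then \[b_q(k,s)\le (q^s-1)\cdot\frac{s(k-s)+s+2}{\log_q\left(\frac{q^4}{q^3-q+1}\right)}+1.\]
   Context: $\mathbb{F}_q^k$ is viewed as an affine space whose subspaces are the cosets (translates) of vector subspaces of $\mathbb{F}_q^k$; the codimension of an $i$-dimensional affine subspace is $k-i$. An (affine) $s$-blocking set in $\mathbb{F}_q^k$ is a set of points of $\mathbb{F}_q^k$ that contains at least one point of every affine subspace of dimension $k-s$. $b_q(k,s)$ denotes the smallest size of an $s$-blocking set in $\mathbb{F}_q^k$. *)

theory Defs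
  imports Complex_Main "HOL-Library.Cardinality"
begin

text \<open>Points of F^k, represented as functions nat => F vanishing outside {0..<k}.\<close>
definition points :: "nat \<Rightarrow> (nat \<Rightarrow> 'a::field) set" where
  "points k = {x. \<forall>i\<ge>k. x i = 0}"

definition lin_indep :: "nat \<Rightarrow> (nat \<Rightarrow> nat \<Rightarrow> 'a::field) \<Rightarrow> bool" where
  "lin_indep d v \<longleftrightarrow>
     (\<forall>c. (\<forall>i. (\<Sum>j<d. c j * v j i) = 0) \<longrightarrow> (\<forall>j<d. c j = 0))"

definition affine_subspace_dim :: "nat \<Rightarrow> nat \<Rightarrow> (nat \<Rightarrow> 'a::field) set \<Rightarrow> bool" where
  "affine_subspace_dim k d A \<longleftrightarrow>
     (\<exists>a \<in> points k. \<exists>v. (\<forall>j<d. v j \<in> points k) \<and> lin_indep d v \<and>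
        A = {(\<lambda>i. a i + (\<Sum>j<d. c j * v j i)) | c. True})"

definition blocking_set :: "nat \<Rightarrow> nat \<Rightarrow> (nat \<Rightarrow> 'a::field) set \<Rightarrow> bool" where
  "blocking_set k s B \<longleftrightarrow> B \<subseteq> points k \<and>
     (\<forall>A. affine_subspace_dim k (k - s) A \<longrightarrow> B \<inter> A \<noteq> {})"

text \<open>b_q(k,s) for the finite field 'a with q = CARD('a) elements.\<close>
definition bq :: "'a::{finite,field} itself \<Rightarrow> nat \<Rightarrow> nat \<Rightarrow> nat" where
  "bq _ k s = Min {card B | B :: (nat \<Rightarrow> 'a) set. blocking_set k s B}"

end

theory Submission
  imports Defs
begin

definition subsp :: "(nat \<Rightarrow> 'a::field) set \<Rightarrow> bool" where
  "subsp S \<longleftrightarrow> (\<lambda>_. 0) \<in> S \<and> (\<forall>x\<in>S. \<forall>y\<in>S. (\<lambda>i. x i + y i) \<in> S)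
     \<and> (\<forall>c. \<forall>x\<in>S. (\<lambda>i. c * x i) \<in> S)"

definition updk :: "nat \<Rightarrow> (nat \<Rightarrow> 'a) \<times> 'a \<Rightarrow> nat \<Rightarrow> 'a" where
  "updk k p = (fst p)(k := snd p)"

lemma points_Suc: "points (Suc k) = updk k ` (points k \<times> UNIV)"
proof (rule set_eqI, rule iffI)
  fix y assume y: "y \<in> points (Suc k)"
  have "y = updk k (y(k:=0), y k)" by (simp add: updk_def)
  moreover have "y(k:=0) \<in> points k" using y by (auto simp: points_def)
  ultimately show "y \<in> updk k ` (points k \<times> UNIV)"
    by blast
qed (auto simp: points_def updk_def)

lemma inj_points_Suc: "inj_on (updk k) (points k \<times> UNIV)"
proof (rule inj_onI, clarify)
  fix x c y d assume xy: "x \<in> points k" "y \<in> points k" "updk k (x, c) = updk k (y, d)"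
  then have xy': "x(k := c) = y(k := d)" by (simp add: updk_def)
  then have "c = d" by (metis fun_upd_same)
  moreover have "x = y"
  proof
    fix i show "x i = y i"
      using xy xy' by (cases "i = k") (auto simp: points_def dest: fun_cong[where x=i])
  qed
  ultimately show "x = y \<and> c = d" by simp
qed

lemma finite_card_points:
  "finite (points k :: (nat \<Rightarrow> 'a::{finite,field}) set) \<and> card (points k :: (nat \<Rightarrow> 'a) set) = CARD('a)^k"
proof (induction k)
  case 0
  have "points 0 = {(\<lambda>_. 0) :: nat \<Rightarrow> 'a}" by (auto simp: points_def)
  then show ?case by simp
next
  case (Suc k)
  have "card (updk k ` (points k \<times> (UNIV::'a set))) = card ((points k :: (nat \<Rightarrow> 'a) set) \<times> (UNIV :: 'a set))"
    using inj_points_Suc[of k, where 'a='a] by (simp add: card_image)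
  then have "card (points (Suc k) :: (nat \<Rightarrow> 'a) set) = card ((points k :: (nat \<Rightarrow> 'a) set) \<times> (UNIV :: 'a set))"
    by (simp only: points_Suc)
  then show ?case using Suc by (simp add: points_Suc card_cartesian_product)
qed

lemma finite_points[simp]: "finite (points k :: (nat \<Rightarrow> 'a::{finite,field}) set)"
  using finite_card_points by blast
lemma card_points: "card (points k :: (nat \<Rightarrow> 'a::{finite,field}) set) = CARD('a)^k"
  using finite_card_points by blast


definition ext1 :: "(nat \<Rightarrow> 'a::field) set \<Rightarrow> (nat \<Rightarrow> 'a) \<Rightarrow> (nat \<Rightarrow> 'a) set" where
  "ext1 S u = {(\<lambda>i. x i + c * u i) | x c. x \<in> S}"

fun lspan :: "(nat \<Rightarrow> 'a::field) set \<Rightarrow> (nat \<Rightarrow> 'a) list \<Rightarrow> (nat \<Rightarrow> 'a) set" where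
  "lspan S [] = S"
| "lspan S (u # us) = lspan (ext1 S u) us"

lemma subsp_zero: "subsp S \<Longrightarrow> (\<lambda>_. 0) \<in> S"
  unfolding subsp_def by blast
lemma subsp_add: "subsp S \<Longrightarrow> x \<in> S \<Longrightarrow> y \<in> S \<Longrightarrow> (\<lambda>i. x i + y i) \<in> S"
  unfolding subsp_def by blast
lemma subsp_smul: "subsp S \<Longrightarrow> x \<in> S \<Longrightarrow> (\<lambda>i. c * x i) \<in> S"
  unfolding subsp_def by blast

lemma ext1_I: "x \<in> S \<Longrightarrow> (\<lambda>i. x i + c * u i) \<in> ext1 S u"
  unfolding ext1_def by blast

lemma ext1_sub: "S \<subseteq> ext1 S u"
proof
  fix x assume "x \<in> S"
  then show "x \<in> ext1 S u" unfolding ext1_def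
    by (intro CollectI exI[of _ x] exI[of _ 0]) auto
qed

lemma ext1_mono: "S \<subseteq> R \<Longrightarrow> ext1 S u \<subseteq> ext1 R u"
  unfolding ext1_def by blast

lemma subsp_ext1:
  assumes "subsp S" shows "subsp (ext1 S u)"
  unfolding subsp_def
proof (intro conjI ballI allI)
  show "(\<lambda>_. 0) \<in> ext1 S u" using assms ext1_sub unfolding subsp_def by blast
next
  fix x y assume "x \<in> ext1 S u" "y \<in> ext1 S u"
  then obtain x0 c y0 d where x: "x0 \<in> S" "x = (\<lambda>i. x0 i + c * u i)"
    and y: "y0 \<in> S" "y = (\<lambda>i. y0 i + d * u i)" unfolding ext1_def by blast
  have "(\<lambda>i. x0 i + y0 i) \<in> S" using x y assms unfolding subsp_def by blast
  moreover have "(\<lambda>i. x i + y i) = (\<lambda>i. (x0 i + y0 i) + (c + d) * u i)"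
    using x y by (auto simp: algebra_simps)
  ultimately show "(\<lambda>i. x i + y i) \<in> ext1 S u" using ext1_I[of "\<lambda>i. x0 i + y0 i" S "c + d" u] by simp
next
  fix c x assume "x \<in> ext1 S u"
  then obtain x0 d where x: "x0 \<in> S" "x = (\<lambda>i. x0 i + d * u i)" unfolding ext1_def by blast
  have "(\<lambda>i. c * x0 i) \<in> S" using x assms unfolding subsp_def by blast
  moreover have "(\<lambda>i. c * x i) = (\<lambda>i. c * x0 i + (c * d) * u i)"
    using x by (auto simp: algebra_simps)
  ultimately show "(\<lambda>i. c * x i) \<in> ext1 S u" using ext1_I[of "\<lambda>i. c * x0 i" S "c * d" u] by simp
qed

lemma subsp_neg: "subsp S \<Longrightarrow> x \<in> S \<Longrightarrow> (\<lambda>i. - x i) \<in> S"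
  using subsp_smul[of S x "-1"] by simp

lemma subsp_diff: "subsp S \<Longrightarrow> x \<in> S \<Longrightarrow> y \<in> S \<Longrightarrow> (\<lambda>i. x i - y i) \<in> S"
proof -
  assume "subsp S" "x \<in> S" "y \<in> S"
  then have "(\<lambda>i. x i + (- y i)) \<in> S" using subsp_add[of S x "\<lambda>i. - y i"] subsp_neg[of S y] by blast
  then show ?thesis by simp
qed

lemma ext1_in: assumes "subsp S" "u \<in> S" shows "ext1 S u = S"
proof
  show "ext1 S u \<subseteq> S"
  proof
    fix x assume "x \<in> ext1 S u"
    then obtain x0 c where x: "x0 \<in> S" "x = (\<lambda>i. x0 i + c * u i)" unfolding ext1_def by blast
    have "(\<lambda>i. c * u i) \<in> S" using assms subsp_smul by blast
    then show "x \<in> S" using x assms subsp_add[of S x0 "\<lambda>i. c * u i"] by blast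
  qed
qed (rule ext1_sub)

lemma ext1_points: "S \<subseteq> points k \<Longrightarrow> u \<in> points k \<Longrightarrow> ext1 S u \<subseteq> points k"
  unfolding ext1_def points_def by auto

lemma ext1_image: "ext1 S u = (\<lambda>p. (\<lambda>i. fst p i + snd p * u i)) ` (S \<times> UNIV)"
  unfolding ext1_def by (auto intro!: image_eqI)

lemma finite_ext1: "finite S \<Longrightarrow> finite (ext1 S (u :: nat \<Rightarrow> 'a::{finite,field}))"
  unfolding ext1_image by simp

lemma card_ext1_le: "finite S \<Longrightarrow> card (ext1 S (u :: nat \<Rightarrow> 'a::{finite,field})) \<le> card S * CARD('a)"
proof -
  assume "finite S"
  have "card (ext1 S u) \<le> card (S \<times> (UNIV :: 'a set))"
    unfolding ext1_image by (rule card_image_le) (simp add: \<open>finite S\<close>)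
  then show ?thesis by (simp add: card_cartesian_product)
qed

lemma card_ext1:
  assumes "subsp S" "finite S" "u \<notin> S"
  shows "card (ext1 S (u :: nat \<Rightarrow> 'a::{finite,field})) = CARD('a) * card S"
proof -
  have inj: "inj_on (\<lambda>p. (\<lambda>i. fst p i + snd p * u i)) (S \<times> (UNIV :: 'a set))"
  proof (rule inj_onI, clarify)
    fix x c y d assume xy: "x \<in> S" "y \<in> S"
      and eq: "(\<lambda>i. fst (x, c) i + snd (x, c) * u i) = (\<lambda>i. fst (y, d) i + snd (y, d) * u i)"
    have eqi: "x i + c * u i = y i + d * u i" for i using fun_cong[OF eq, of i] by simp
    show "x = y \<and> c = d"
    proof (cases "c = d")
      case True
      then show ?thesis using eqi by auto
    next
      case False
      have "(\<lambda>i. y i - x i) \<in> S" using subsp_diff[OF assms(1) xy(2) xy(1)] .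
      then have "(\<lambda>i. inverse (c - d) * (y i - x i)) \<in> S" using subsp_smul[OF assms(1), of "\<lambda>i. y i - x i" "inverse (c - d)"] by simp
      moreover have "(\<lambda>i. inverse (c - d) * (y i - x i)) = u"
      proof
        fix i have "y i - x i = (c - d) * u i" using eqi[of i] by (simp add: algebra_simps)
        then show "inverse (c - d) * (y i - x i) = u i" using False by simp
      qed
      ultimately show ?thesis using assms(3) by simp
    qed
  qed
  have "card (ext1 S u) = card (S \<times> (UNIV :: 'a set))"
    unfolding ext1_image by (rule card_image[OF inj])
  then show ?thesis by (simp add: card_cartesian_product)
qed

lemma lspan_mono: "S \<subseteq> R \<Longrightarrow> lspan S us \<subseteq> lspan R us"
  by (induction us arbitrary: S R) (auto intro: ext1_mono)

lemma lspan_sup: "S \<subseteq> lspan S us"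
proof (induction us arbitrary: S)
  case (Cons u us)
  show ?case using ext1_sub[of S u] Cons.IH[of "ext1 S u"] by simp
qed simp

lemma subsp_lspan: "subsp S \<Longrightarrow> subsp (lspan S us)"
  by (induction us arbitrary: S) (auto intro: subsp_ext1)

lemma lspan_points: "S \<subseteq> points k \<Longrightarrow> set us \<subseteq> points k \<Longrightarrow> lspan S us \<subseteq> points k"
proof (induction us arbitrary: S)
  case (Cons u us)
  show ?case using ext1_points[of S k u] Cons by simp
qed simp

lemma finite_lspan: "finite S \<Longrightarrow> finite (lspan S (us :: (nat \<Rightarrow> 'a::{finite,field}) list))"
  by (induction us arbitrary: S) (auto intro: finite_ext1)

lemma card_lspan_le: "finite S \<Longrightarrow>
   card (lspan S (us :: (nat \<Rightarrow> 'a::{finite,field}) list)) \<le> card S * CARD('a) ^ length us"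
proof (induction us arbitrary: S)
  case Nil then show ?case by simp
next
  case (Cons u us)
  have "card (lspan S (u # us)) \<le> card (ext1 S u) * CARD('a) ^ length us"
    using Cons.IH[OF finite_ext1[OF Cons.prems, of u]] by simp
  also have "\<dots> \<le> card S * CARD('a) * CARD('a) ^ length us"
    using card_ext1_le[OF Cons.prems, of u] by simp
  finally show ?case by simp
qed

lemma ext1_swap_in:
  assumes "subsp S" "u \<in> ext1 S a" "u \<notin> S" shows "a \<in> ext1 S u"
proof -
  obtain x c where x: "x \<in> S" "u = (\<lambda>i. x i + c * a i)" using assms(2) unfolding ext1_def by blast
  have c: "c \<noteq> 0" using x assms(3) by auto
  have "(\<lambda>i. (- inverse c) * x i) \<in> S" using x assms(1) subsp_smul by blast
  moreover have "a = (\<lambda>i. (- inverse c) * x i + inverse c * u i)"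
    using c x by (auto simp: algebra_simps)
  ultimately show ?thesis using ext1_I[of "\<lambda>i. (- inverse c) * x i" S "inverse c" u] by simp
qed

lemma ext1_swap_out:
  assumes "subsp S" "a \<notin> S" "u \<notin> ext1 S a" shows "a \<notin> ext1 S u"
proof
  assume "a \<in> ext1 S u"
  then obtain x c where x: "x \<in> S" "a = (\<lambda>i. x i + c * u i)" unfolding ext1_def by blast
  have c: "c \<noteq> 0" using x assms(2) by auto
  have "(\<lambda>i. (- inverse c) * x i) \<in> S" using x assms(1) subsp_smul by blast
  moreover have "u = (\<lambda>i. (- inverse c) * x i + inverse c * a i)"
    using c x by (auto simp: algebra_simps)
  ultimately have "u \<in> ext1 S a" using ext1_I[of "\<lambda>i. (- inverse c) * x i" S "inverse c" a] by simp
  then show False using assms(3) by simp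
qed


fun fr :: "real \<Rightarrow> nat \<Rightarrow> nat \<Rightarrow> real" where
  "fr q 0 n = 0"
| "fr q (Suc e) 0 = 1"
| "fr q (Suc e) (Suc n) = fr q (Suc e) n / q ^ Suc e + (1 - 1 / q ^ e) * fr q e n"

lemma fr_nonneg: "q \<ge> 1 \<Longrightarrow> fr q e n \<ge> 0"
proof (induction n arbitrary: e)
  case 0 then show ?case by (cases e) auto
next
  case (Suc n)
  then show ?case
  proof (cases e)
    case (Suc e')
    have "1 / q ^ e' \<le> 1" using Suc.prems by simp
    then have "0 \<le> (1 - 1 / q ^ e') * fr q e' n"
      using Suc.IH[OF Suc.prems, of e'] by (intro mult_nonneg_nonneg) auto
    moreover have "0 \<le> fr q (Suc e') n / q ^ Suc e'"
      using Suc.IH[OF Suc.prems, of "Suc e'"] Suc.prems by (intro divide_nonneg_nonneg) auto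
    ultimately show ?thesis using Suc by simp
  qed simp
qed

lemma fr_L1: "q \<ge> 1 \<Longrightarrow> fr q e n \<le> q * fr q e (Suc n)"
proof (induction n arbitrary: e)
  case 0
  show ?case
  proof (cases e)
    case (Suc e')
    have q: "q > 0" using 0 by simp
    have e1: "(1 - 1 / q ^ e') * fr q e' 0 = 1 - 1 / q ^ e'" by (cases e') auto
    define x where "x = 1 / q ^ e'"
    have x: "x \<le> 1" "x \<ge> 0" using 0 by (auto simp: x_def)
    have f1: "fr q e (Suc 0) = 1 / q ^ Suc e' + (1 - x)" using Suc e1 by (simp add: x_def)
    have qx: "q * (1 / q ^ Suc e') = x" using q by (simp add: x_def)
    have "q * fr q e (Suc 0) = x + q * (1 - x)" unfolding f1 using qx by (simp add: algebra_simps)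
    also have "\<dots> \<ge> x + 1 * (1 - x)" using x 0 by (intro add_left_mono mult_right_mono) auto
    finally show ?thesis using Suc by simp
  qed simp
next
  case (Suc n)
  show ?case
  proof (cases e)
    case (Suc e')
    have q: "q > 0" using Suc.prems by simp
    have a: "fr q (Suc e') n / q ^ Suc e' \<le> q * fr q (Suc e') (Suc n) / q ^ Suc e'"
      by (rule divide_right_mono[OF Suc.IH[OF Suc.prems, of "Suc e'"]]) (use q in simp)
    have b: "(1 - 1 / q ^ e') * fr q e' n \<le> (1 - 1 / q ^ e') * (q * fr q e' (Suc n))"
      using Suc.IH[OF Suc.prems, of e'] Suc.prems by (intro mult_left_mono) (auto simp: field_simps)
    show ?thesis using a b Suc q by (simp add: algebra_simps)
  qed simp
qed

lemma fr_L2: "q \<ge> 1 \<Longrightarrow> e \<ge> 1 \<Longrightarrow> fr q (Suc e) (Suc n) \<le> fr q e n"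
proof (induction n arbitrary: e)
  case 0
  then obtain e' where e: "e = Suc e'" by (cases e) auto
  have q: "q > 0" using 0 by simp
  have "1 / q ^ Suc e \<le> 1 / q ^ e" using 0 by (simp add: field_simps)
  then show ?case using e q by simp
next
  case (Suc n)
  have q: "q > 0" using Suc.prems by simp
  have le1: "1 / q ^ e \<le> 1" using Suc.prems by simp
  have a: "fr q (Suc e) (Suc n) / q ^ Suc e \<le> fr q e n / q ^ Suc e"
    using Suc.IH[OF Suc.prems] q by (simp add: divide_right_mono)
  also have "\<dots> \<le> q * fr q e (Suc n) / q ^ Suc e"
    by (rule divide_right_mono[OF fr_L1[OF Suc.prems(1), of e n]]) (use q in simp)
  also have "\<dots> = fr q e (Suc n) / q ^ e" using q by simp
  finally have "fr q (Suc e) (Suc (Suc n)) \<le> fr q e (Suc n) / q ^ e + (1 - 1 / q ^ e) * fr q e (Suc n)"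
    by simp
  also have "\<dots> = fr q e (Suc n)" by (simp add: algebra_simps)
  finally show ?case .
qed

lemma fr_diag: assumes "q \<ge> 1" "s \<ge> 2" shows "fr q s s \<le> (q^3 - q + 1) / q^4"
  using assms(2)
proof (induction s rule: nat_induct_at_least)
  case base
  have q: "q > 0" using assms by simp
  show ?case using q by (simp add: eval_nat_numeral field_simps)
next
  case (Suc s)
  have "fr q (Suc s) (Suc s) \<le> fr q s s" using fr_L2[of q s s] Suc assms by simp
  then show ?case using Suc by simp
qed


definition lists_k :: "nat \<Rightarrow> nat \<Rightarrow> (nat \<Rightarrow> 'a::field) list set" where
  "lists_k k n = {us. set us \<subseteq> points k \<and> length us = n}"

lemma lists_k_Suc: "{us \<in> lists_k k (Suc n). P us} =
   (\<lambda>p. fst p # snd p) ` Sigma (points k) (\<lambda>u. {us \<in> lists_k k n. P (u # us)})"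
proof (rule set_eqI, rule iffI)
  fix x assume x: "x \<in> {us \<in> lists_k k (Suc n). P us}"
  then obtain u us where "x = u # us" unfolding lists_k_def by (cases x) auto
  then show "x \<in> (\<lambda>p. fst p # snd p) ` Sigma (points k) (\<lambda>u. {us \<in> lists_k k n. P (u # us)})"
    using x unfolding lists_k_def by (intro image_eqI[where x="(u, us)"]) auto
qed (auto simp: lists_k_def)

lemma card_lists_k_Suc:
  "card {us \<in> lists_k k (Suc n). P us} =
   (\<Sum>u\<in>points k. card {us \<in> lists_k k n. P (u # us)})"
  for P :: "(nat \<Rightarrow> 'a::{finite,field}) list \<Rightarrow> bool" and k :: nat
proof -
  have inj: "inj_on (\<lambda>p. fst p # snd p) (Sigma (points k :: (nat \<Rightarrow> 'a::{finite,field}) set) (\<lambda>u. {us \<in> lists_k k n. P (u # us)}))"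
    by (auto intro: inj_onI)
  have fin: "finite {us \<in> lists_k k n. P (u # us)}" for u :: "nat \<Rightarrow> 'a"
    unfolding lists_k_def by (rule finite_subset[OF _ finite_lists_length_eq[OF finite_points[of k], of n]]) auto
  show ?thesis
    unfolding lists_k_Suc card_image[OF inj] by (rule card_SigmaI) (auto simp: fin)
qed

lemma arith1:
  fixes Q M c F0 F1 :: real
  assumes "Q > 0" "c * Q ^ Suc e = M"
  shows "(M - Q * c) * F0 * M ^ n + c * F1 * M ^ n = (F1 / Q ^ Suc e + (1 - 1 / Q ^ e) * F0) * M ^ Suc n"
proof -
  have c: "c = M / Q ^ Suc e" using assms by (simp add: field_simps)
  show ?thesis unfolding c using assms(1) by (simp add: field_simps)
qed

lemma miss_count:
  fixes S :: "(nat \<Rightarrow> 'a::{finite,field}) set"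
  assumes "subsp S" "S \<subseteq> points k" "a \<in> points k" "a \<notin> S"
    "card S * CARD('a) ^ e = CARD('a) ^ k"
  shows "real (card {us \<in> lists_k k n. a \<notin> lspan S us})
           \<le> fr (real CARD('a)) e n * real (CARD('a) ^ k) ^ n"
  using assms
proof (induction n arbitrary: S e)
  case 0
  note P0 = 0
  have finS: "finite S" using finite_subset[OF P0(2) finite_points] .
  obtain e' where e: "e = Suc e'"
  proof (cases e)
    case 0
    have "card S = CARD('a) ^ k" using P0(5) 0 by simp
    then have "card S = card (points k :: (nat \<Rightarrow> 'a) set)" by (simp add: card_points)
    then have "S = points k" using card_subset_eq[OF finite_points P0(2)] by simp
    then show ?thesis using P0 by simp
  qed
  have "{us \<in> lists_k k 0. a \<notin> lspan S us} \<subseteq> {[]}" unfolding lists_k_def by auto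
  then have "card {us \<in> lists_k k 0. a \<notin> lspan S us} \<le> 1"
    using card_mono[OF _ \<open>{us \<in> lists_k k 0. a \<notin> lspan S us} \<subseteq> {[]}\<close>] by simp
  then show ?case using e by simp
next
  case (Suc n)
  let ?q = "CARD('a)"
  let ?N = "?q ^ k"
  let ?B = "\<lambda>u. card {us \<in> lists_k k n. a \<notin> lspan S (u # us)}"
  have finS: "finite S" using finite_subset[OF Suc.prems(2) finite_points] .
  obtain e' where e: "e = Suc e'"
  proof (cases e)
    case 0
    have "card S = CARD('a) ^ k" using Suc.prems(5) 0 by simp
    then have "card S = card (points k :: (nat \<Rightarrow> 'a) set)" by (simp add: card_points)
    then have "S = points k" using card_subset_eq[OF finite_points Suc.prems(2)] by simp
    then show ?thesis using Suc.prems by simp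
  qed
  have q0: "?q > 0" by simp
  define Sa where "Sa = ext1 S a"
  have SSa: "S \<subseteq> Sa" unfolding Sa_def by (rule ext1_sub)
  have Sap: "Sa \<subseteq> points k" unfolding Sa_def by (rule ext1_points[OF Suc.prems(2,3)])
  have cSa: "card Sa = ?q * card S" unfolding Sa_def by (rule card_ext1[OF Suc.prems(1) finS Suc.prems(4)])
  have finSa: "finite Sa" using finite_subset[OF Sap finite_points] .
  have B1: "real (?B u) \<le> fr ?q e n * real ?N ^ n" if "u \<in> S" for u
    using Suc.IH[OF Suc.prems] ext1_in[OF Suc.prems(1) that] by simp
  have B2: "?B u = 0" if "u \<in> Sa - S" for u
  proof -
    have "a \<in> ext1 S u" using ext1_swap_in[OF Suc.prems(1)] that unfolding Sa_def by blast
    then have "a \<in> lspan (ext1 S u) us" for us using lspan_sup by blast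
    then show ?thesis by simp
  qed
  have B3: "real (?B u) \<le> fr ?q e' n * real ?N ^ n" if "u \<in> points k - Sa" for u
  proof -
    have uS: "u \<notin> S" using that SSa by blast
    have "a \<notin> ext1 S u" using ext1_swap_out[OF Suc.prems(1,4)] that unfolding Sa_def by blast
    moreover have "card (ext1 S u) * ?q ^ e' = ?q ^ k"
      using card_ext1[OF Suc.prems(1) finS uS] Suc.prems(5) e by (simp add: algebra_simps)
    ultimately show ?thesis
      using Suc.IH[OF subsp_ext1[OF Suc.prems(1)] ext1_points[OF Suc.prems(2)] Suc.prems(3)] that
      by simp
  qed
  have "real (card {us \<in> lists_k k (Suc n). a \<notin> lspan S us}) = (\<Sum>u\<in>points k. real (?B u))"
    by (subst card_lists_k_Suc) simp
  also have "\<dots> = (\<Sum>u\<in>points k - Sa. real (?B u)) + (\<Sum>u\<in>Sa - S. real (?B u)) + (\<Sum>u\<in>S. real (?B u))"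
  proof -
    have "(\<Sum>u\<in>points k. real (?B u)) = (\<Sum>u\<in>points k - Sa. real (?B u)) + (\<Sum>u\<in>Sa. real (?B u))"
      by (rule sum.subset_diff[OF Sap finite_points])
    moreover have "(\<Sum>u\<in>Sa. real (?B u)) = (\<Sum>u\<in>Sa - S. real (?B u)) + (\<Sum>u\<in>S. real (?B u))"
      by (rule sum.subset_diff[OF SSa finSa])
    ultimately show ?thesis by simp
  qed
  also have "\<dots> \<le> (\<Sum>u\<in>points k - Sa. fr ?q e' n * real ?N ^ n) + 0 + (\<Sum>u\<in>S. fr ?q e n * real ?N ^ n)"
    using B1 B2 B3 by (intro add_mono sum_mono) auto
  also have "\<dots> = real (?N - card Sa) * fr ?q e' n * real ?N ^ n + real (card S) * fr ?q e n * real ?N ^ n"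
    using card_Diff_subset[OF finSa Sap] by (simp add: card_points)
  also have "\<dots> = fr ?q e (Suc n) * real ?N ^ Suc n"
  proof -
    have cS: "real (card S) * real ?q ^ Suc e' = real ?N"
      using Suc.prems(5) e by (metis of_nat_mult of_nat_power)
    have cSa': "card Sa \<le> ?N" using card_mono[OF finite_points Sap] by (simp add: card_points)
    have "real (?N - card Sa) = real ?N - real ?q * real (card S)"
      using cSa cSa' by (simp add: of_nat_diff)
    then show ?thesis using arith1[of "real ?q" "real (card S)" e' "real ?N" "fr ?q e' n" n "fr ?q e n"] cS e q0
      by simp
  qed
  finally show ?case .
qed


definition spanv :: "nat \<Rightarrow> (nat \<Rightarrow> nat \<Rightarrow> 'a::field) \<Rightarrow> (nat \<Rightarrow> 'a) set" where
  "spanv d v = {(\<lambda>i. \<Sum>j<d. c j * v j i) | c. True}"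

lemma sum_cong_lt: "(\<And>j. j < d \<Longrightarrow> v j = w j) \<Longrightarrow> (\<Sum>j<d. c j * v j i) = (\<Sum>j<d. c j * w j i)"
  by (rule sum.cong) auto

lemma spanv_cong: "(\<And>j. j < d \<Longrightarrow> v j = w j) \<Longrightarrow> spanv d v = spanv d w"
  unfolding spanv_def using sum_cong_lt[of d v w] by presburger

lemma lin_indep_cong: "(\<And>j. j < d \<Longrightarrow> v j = w j) \<Longrightarrow> lin_indep d v = lin_indep d w"
  unfolding lin_indep_def using sum_cong_lt[of d v w] by presburger

lemma spanv_I: "(\<lambda>i. \<Sum>j<d. c j * v j i) \<in> spanv d v"
  unfolding spanv_def by blast

lemma spanv_restrict: "spanv d v = (\<lambda>c. (\<lambda>i. \<Sum>j<d. c j * v j i)) ` points d"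
proof (rule set_eqI, rule iffI)
  fix x assume "x \<in> spanv d v"
  then obtain c where x: "x = (\<lambda>i. \<Sum>j<d. c j * v j i)" unfolding spanv_def by blast
  define c' where "c' = (\<lambda>j. if j < d then c j else 0)"
  have "c' \<in> points d" unfolding c'_def points_def by auto
  moreover have "x = (\<lambda>i. \<Sum>j<d. c' j * v j i)" unfolding x c'_def by auto
  ultimately show "x \<in> (\<lambda>c. (\<lambda>i. \<Sum>j<d. c j * v j i)) ` points d" by blast
qed (auto simp: spanv_def)

lemma inj_spanv:
  assumes "lin_indep d v"
  shows "inj_on (\<lambda>c. (\<lambda>i. \<Sum>j<d. c j * v j i)) (points d)"
proof (rule inj_onI)
  fix c c' assume cc: "c \<in> points d" "c' \<in> points d"
    and eq: "(\<lambda>i. \<Sum>j<d. c j * v j i) = (\<lambda>i. \<Sum>j<d. c' j * v j i)"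
  have "\<forall>i. (\<Sum>j<d. (c j - c' j) * v j i) = 0"
  proof
    fix i
    have "(\<Sum>j<d. c j * v j i) = (\<Sum>j<d. c' j * v j i)" using fun_cong[OF eq, of i] by simp
    then show "(\<Sum>j<d. (c j - c' j) * v j i) = 0"
      by (simp add: algebra_simps sum_subtractf)
  qed
  then have "\<forall>j<d. c j - c' j = 0" using spec[OF assms[unfolded lin_indep_def], of "\<lambda>j. c j - c' j"]
    by simp
  show "c = c'"
  proof
    fix j show "c j = c' j"
    proof (cases "j < d")
      case True then show ?thesis using \<open>\<forall>j<d. c j - c' j = 0\<close> by simp
    next
      case False then show ?thesis using cc unfolding points_def by simp
    qed
  qed
qed

lemma card_spanv:
  assumes "lin_indep d v"
  shows "card (spanv d (v :: nat \<Rightarrow> nat \<Rightarrow> 'a::{finite,field})) = CARD('a) ^ d"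
  unfolding spanv_restrict card_image[OF inj_spanv[OF assms]] by (rule card_points)

lemma finite_spanv: "finite (spanv d (v :: nat \<Rightarrow> nat \<Rightarrow> 'a::{finite,field}))"
  unfolding spanv_restrict by simp

lemma spanv_sub:
  assumes "subsp S" "\<And>j. j < d \<Longrightarrow> v j \<in> S"
  shows "spanv d v \<subseteq> S"
proof -
  have "(\<lambda>i. \<Sum>j<n. c j * v j i) \<in> S" if "n \<le> d" for n c
    using that
  proof (induction n)
    case 0 then show ?case using subsp_zero[OF assms(1)] by simp
  next
    case (Suc n)
    have "(\<lambda>i. c n * v n i) \<in> S" using subsp_smul[OF assms(1) assms(2)] Suc by simp
    then have "(\<lambda>i. (\<Sum>j<n. c j * v j i) + c n * v n i) \<in> S"
      using subsp_add[OF assms(1), of "\<lambda>i. \<Sum>j<n. c j * v j i" "\<lambda>i. c n * v n i"] Suc by simp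
    then show ?case by simp
  qed
  then show ?thesis unfolding spanv_def by auto
qed

lemma subsp_spanv: "subsp (spanv d v)"
  unfolding subsp_def
proof (intro conjI ballI allI)
  show "(\<lambda>_. 0) \<in> spanv d v" unfolding spanv_def by (intro CollectI exI[of _ "\<lambda>_. 0"]) auto
next
  fix x y assume "x \<in> spanv d v" "y \<in> spanv d v"
  then obtain c c' where "x = (\<lambda>i. \<Sum>j<d. c j * v j i)" "y = (\<lambda>i. \<Sum>j<d. c' j * v j i)"
    unfolding spanv_def by blast
  then have "(\<lambda>i. x i + y i) = (\<lambda>i. \<Sum>j<d. (c j + c' j) * v j i)"
    by (simp add: algebra_simps sum.distrib)
  then show "(\<lambda>i. x i + y i) \<in> spanv d v" using spanv_I[where d=d and c="\<lambda>j. c j + c' j" and v=v] by simp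
next
  fix a x assume "x \<in> spanv d v"
  then obtain c where "x = (\<lambda>i. \<Sum>j<d. c j * v j i)" unfolding spanv_def by blast
  then have "(\<lambda>i. a * x i) = (\<lambda>i. \<Sum>j<d. (a * c j) * v j i)"
    by (simp add: algebra_simps sum_distrib_left)
  then show "(\<lambda>i. a * x i) \<in> spanv d v" using spanv_I[where d=d and c="\<lambda>j. a * c j" and v=v] by simp
qed

lemma spanv_points: "(\<And>j. j < d \<Longrightarrow> v j \<in> points k) \<Longrightarrow> spanv d v \<subseteq> points k"
  unfolding spanv_def points_def by auto

lemma lin_indep_Suc:
  "lin_indep (Suc n) w \<longleftrightarrow> lin_indep n w \<and> w n \<notin> spanv n w"
proof
  assume L: "lin_indep (Suc n) w"
  have "lin_indep n w" unfolding lin_indep_def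
  proof (intro allI impI)
    fix c j assume c: "\<forall>i. (\<Sum>j<n. c j * w j i) = 0" and j: "j < n"
    let ?c = "c(n := 0)"
    have "\<forall>i. (\<Sum>j<Suc n. ?c j * w j i) = 0" using c by simp
    then have "\<forall>j<Suc n. ?c j = 0" using L unfolding lin_indep_def by blast
    then show "c j = 0" using j by (metis fun_upd_other less_SucI less_irrefl_nat)
  qed
  moreover have "w n \<notin> spanv n w"
  proof
    assume "w n \<in> spanv n w"
    then obtain c where c: "w n = (\<lambda>i. \<Sum>j<n. c j * w j i)" unfolding spanv_def by blast
    let ?c = "c(n := -1)"
    have "\<forall>i. (\<Sum>j<Suc n. ?c j * w j i) = 0"
    proof
      fix i
      have "(\<Sum>j<n. ?c j * w j i) = (\<Sum>j<n. c j * w j i)" by (rule sum.cong) auto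
      then show "(\<Sum>j<Suc n. ?c j * w j i) = 0" using fun_cong[OF c, of i] by simp
    qed
    then have "?c n = 0" using L unfolding lin_indep_def by blast
    then show False by simp
  qed
  ultimately show "lin_indep n w \<and> w n \<notin> spanv n w" by blast
next
  assume R: "lin_indep n w \<and> w n \<notin> spanv n w"
  show "lin_indep (Suc n) w" unfolding lin_indep_def
  proof (intro allI impI)
    fix c j assume c: "\<forall>i. (\<Sum>j<Suc n. c j * w j i) = 0" and j: "j < Suc n"
    have cn: "c n = 0"
    proof (rule ccontr)
      assume cn: "c n \<noteq> 0"
      have "w n = (\<lambda>i. \<Sum>j<n. (- c j / c n) * w j i)"
      proof
        fix i
        have "(\<Sum>j<n. c j * w j i) + c n * w n i = 0" using c by simp
        then have h: "c n * w n i = - (\<Sum>j<n. c j * w j i)" by (simp add: add_eq_0_iff)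
        have "w n i = (c n * w n i) / c n" using cn by simp
        then have "w n i = - (\<Sum>j<n. c j * w j i) / c n" using h by simp
        also have "\<dots> = (\<Sum>j<n. (- c j / c n) * w j i)"
          by (simp add: sum_divide_distrib sum_negf)
        finally show "w n i = (\<Sum>j<n. (- c j / c n) * w j i)" .
      qed
      then have "w n \<in> spanv n w" using spanv_I[where d=n and c="\<lambda>j. - c j / c n" and v=w] by simp
      then show False using R by blast
    qed
    have "\<forall>i. (\<Sum>j<n. c j * w j i) = 0" using c cn by simp
    then have "\<forall>j<n. c j = 0" using R unfolding lin_indep_def by blast
    then show "c j = 0" using j cn less_Suc_eq by auto
  qed
qed


definition indeps :: "(nat \<Rightarrow> 'a::field) set \<Rightarrow> nat \<Rightarrow> (nat \<Rightarrow> nat \<Rightarrow> 'a) set" where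
  "indeps S n = {v. (\<forall>j<n. v j \<in> S) \<and> (\<forall>j\<ge>n. v j = (\<lambda>_. 0)) \<and> lin_indep n v}"

definition upd2 :: "nat \<Rightarrow> (nat \<Rightarrow> 'b) \<times> 'b \<Rightarrow> nat \<Rightarrow> 'b" where
  "upd2 n p = (fst p)(n := snd p)"

lemma indeps_0: "indeps S 0 = {(\<lambda>_ _. 0)}"
  unfolding indeps_def lin_indep_def by auto

lemma indeps_Suc: "indeps S (Suc n) = upd2 n ` Sigma (indeps S n) (\<lambda>v. S - spanv n v)"
proof (rule set_eqI, rule iffI)
  fix w assume w: "w \<in> indeps S (Suc n)"
  define v where "v = w(n := (\<lambda>_. 0))"
  have cong: "\<And>j. j < n \<Longrightarrow> v j = w j" unfolding v_def by simp
  have li: "lin_indep n w" "w n \<notin> spanv n w" using w lin_indep_Suc unfolding indeps_def by auto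
  have lv: "lin_indep n v" using lin_indep_cong[of n v w, OF cong] li(1) by simp
  have "v \<in> indeps S n"
    using w lv unfolding indeps_def by (auto simp: v_def)
  moreover have "w n \<in> S - spanv n v" using w li(2) spanv_cong[of n v w, OF cong] unfolding indeps_def by auto
  moreover have "w = upd2 n (v, w n)" unfolding upd2_def v_def by simp
  ultimately show "w \<in> upd2 n ` Sigma (indeps S n) (\<lambda>v. S - spanv n v)" by blast
next
  fix w assume "w \<in> upd2 n ` Sigma (indeps S n) (\<lambda>v. S - spanv n v)"
  then obtain v u where vu: "v \<in> indeps S n" "u \<in> S - spanv n v" and w: "w = v(n := u)"
    unfolding upd2_def by auto
  have cong: "\<And>j. j < n \<Longrightarrow> w j = v j" unfolding w by simp
  have "lin_indep n w" using vu(1) lin_indep_cong[of n w v, OF cong] unfolding indeps_def by auto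
  moreover have "w n \<notin> spanv n w" using vu(2) spanv_cong[of n w v, OF cong] w by simp
  ultimately have "lin_indep (Suc n) w" using lin_indep_Suc by blast
  moreover have "\<forall>j<Suc n. w j \<in> S" using vu unfolding indeps_def w by (auto simp: less_Suc_eq)
  moreover have "\<forall>j\<ge>Suc n. w j = (\<lambda>_. 0)" using vu unfolding indeps_def w by auto
  ultimately show "w \<in> indeps S (Suc n)" unfolding indeps_def by blast
qed

lemma inj_upd2: "inj_on (upd2 n) (Sigma (indeps S n) B)"
proof (rule inj_onI, clarify)
  fix v u v' u' assume vv: "v \<in> indeps S n" "v' \<in> indeps S n" and eq: "upd2 n (v, u) = upd2 n (v', u')"
  have eq': "v(n := u) = v'(n := u')" using eq unfolding upd2_def by simp
  have "u = u'" using fun_cong[OF eq', of n] by simp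
  moreover have "v = v'"
  proof
    fix j show "v j = v' j"
    proof (cases "j = n")
      case True then show ?thesis using vv unfolding indeps_def by simp
    next
      case False then show ?thesis using fun_cong[OF eq', of j] by simp
    qed
  qed
  ultimately show "v = v' \<and> u = u'" by simp
qed

lemma finite_card_indeps:
  fixes S :: "(nat \<Rightarrow> 'a::{finite,field}) set"
  assumes "subsp S" "finite S"
  shows "finite (indeps S n) \<and> card (indeps S n) = (\<Prod>i<n. card S - CARD('a) ^ i)"
proof (induction n)
  case 0 then show ?case by (simp add: indeps_0)
next
  case (Suc n)
  have cd: "card (S - spanv n v) = card S - CARD('a) ^ n" if "v \<in> indeps S n" for v
  proof -
    have sub: "spanv n v \<subseteq> S" using that spanv_sub[OF assms(1)] unfolding indeps_def by blast
    moreover have "card (spanv n v) = CARD('a) ^ n" using that card_spanv unfolding indeps_def by blast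
    ultimately show ?thesis using card_Diff_subset[OF finite_spanv sub] by simp
  qed
  have fin: "finite (Sigma (indeps S n) (\<lambda>v. S - spanv n v))" using Suc assms by auto
  have "card (indeps S (Suc n)) = card (Sigma (indeps S n) (\<lambda>v. S - spanv n v))"
    unfolding indeps_Suc by (rule card_image[OF inj_upd2])
  also have "\<dots> = (\<Sum>v\<in>indeps S n. card (S - spanv n v))"
    by (rule card_SigmaI) (use Suc assms in auto)
  also have "\<dots> = card (indeps S n) * (card S - CARD('a) ^ n)" using cd by simp
  finally show ?case using Suc fin unfolding indeps_Suc by simp
qed


definition flat :: "(nat \<Rightarrow> 'a::field) \<Rightarrow> nat \<Rightarrow> (nat \<Rightarrow> nat \<Rightarrow> 'a) \<Rightarrow> (nat \<Rightarrow> 'a) set" where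
  "flat a d v = {(\<lambda>i. a i + (\<Sum>j<d. c j * v j i)) | c. True}"

lemma asd_iff: "affine_subspace_dim k d A \<longleftrightarrow>
  (\<exists>a\<in>points k. \<exists>v. (\<forall>j<d. v j \<in> points k) \<and> lin_indep d v \<and> A = flat a d v)"
  unfolding affine_subspace_dim_def flat_def by simp

definition transl :: "(nat \<Rightarrow> 'a::field) \<Rightarrow> (nat \<Rightarrow> 'a) \<Rightarrow> nat \<Rightarrow> 'a" where
  "transl a x = (\<lambda>i. a i + x i)"

lemma flat_image: "flat a d v = transl a ` spanv d v"
  unfolding flat_def spanv_def transl_def by auto

lemma translate:
  assumes "subsp V" "x0 \<in> V"
  shows "transl (transl a x0) ` V = transl a ` V"
proof
  show "transl (transl a x0) ` V \<subseteq> transl a ` V"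
  proof
    fix y assume "y \<in> transl (transl a x0) ` V"
    then obtain x where x: "x \<in> V" "y = transl (transl a x0) x" by blast
    have "transl x0 x \<in> V" using subsp_add[OF assms(1) assms(2) x(1)] unfolding transl_def .
    moreover have "y = transl a (transl x0 x)" using x unfolding transl_def by (auto simp: add.assoc)
    ultimately show "y \<in> transl a ` V" by blast
  qed
next
  show "transl a ` V \<subseteq> transl (transl a x0) ` V"
  proof
    fix y assume "y \<in> transl a ` V"
    then obtain x where x: "x \<in> V" "y = transl a x" by blast
    have "(\<lambda>i. x i - x0 i) \<in> V" using subsp_diff[OF assms(1) x(1) assms(2)] .
    moreover have "y = transl (transl a x0) (\<lambda>i. x i - x0 i)" using x unfolding transl_def by auto
    ultimately show "y \<in> transl (transl a x0) ` V" by blast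
  qed
qed

lemma inj_transl: "inj_on (transl a) V"
  by (rule inj_onI) (auto simp: transl_def fun_eq_iff)

lemma card_transl: "card (transl a ` V) = card V"
  by (rule card_image[OF inj_transl])

lemma subsp_points: "subsp (points k)"
  unfolding subsp_def points_def by auto

lemma transl_points: "a \<in> points k \<Longrightarrow> V \<subseteq> points k \<Longrightarrow> transl a ` V \<subseteq> points k"
  unfolding transl_def points_def by auto

definition Fs :: "nat \<Rightarrow> nat \<Rightarrow> 'a::field itself \<Rightarrow> (nat \<Rightarrow> 'a) set set" where
  "Fs k d _ = {A. affine_subspace_dim k d A}"

definition Ps :: "nat \<Rightarrow> nat \<Rightarrow> ((nat \<Rightarrow> 'a::field) \<times> (nat \<Rightarrow> nat \<Rightarrow> 'a)) set" where
  "Ps k d = points k \<times> indeps (points k) d"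

definition phi :: "nat \<Rightarrow> (nat \<Rightarrow> 'a::field) \<times> (nat \<Rightarrow> nat \<Rightarrow> 'a) \<Rightarrow> (nat \<Rightarrow> 'a) set" where
  "phi d p = flat (fst p) d (snd p)"

lemma Fs_eq: "Fs k d TYPE('a::field) = phi d ` (Ps k d :: ((nat \<Rightarrow> 'a) \<times> _) set)"
proof (rule set_eqI, rule iffI)
  fix A assume "A \<in> Fs k d TYPE('a)"
  then obtain a v where av: "a \<in> points k" "\<forall>j<d. v j \<in> points k" "lin_indep d v" "A = flat a d v"
    unfolding Fs_def asd_iff by blast
  define v' where "v' = (\<lambda>j. if j < d then v j else (\<lambda>_. 0))"
  have cong: "\<And>j. j < d \<Longrightarrow> v' j = v j" unfolding v'_def by simp
  have "v' \<in> indeps (points k) d" using av lin_indep_cong[of d v' v, OF cong]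
    unfolding indeps_def v'_def by auto
  moreover have "flat a d v' = A" unfolding av(4) flat_image using spanv_cong[of d v' v, OF cong] by simp
  ultimately show "A \<in> phi d ` Ps k d" using av(1) unfolding phi_def Ps_def by force
next
  fix A assume "A \<in> phi d ` (Ps k d :: ((nat \<Rightarrow> 'a) \<times> _) set)"
  then obtain a v where "a \<in> points k" "v \<in> indeps (points k) d" "A = flat a d v"
    unfolding phi_def Ps_def by auto
  then show "A \<in> Fs k d TYPE('a)" unfolding Fs_def asd_iff indeps_def by auto
qed

lemma finite_card_Ps:
  "finite (Ps k d :: ((nat \<Rightarrow> 'a::{finite,field}) \<times> _) set) \<and>
   card (Ps k d :: ((nat \<Rightarrow> 'a) \<times> _) set) = CARD('a) ^ k * (\<Prod>i<d. CARD('a) ^ k - CARD('a) ^ i)"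
  using finite_card_indeps[OF subsp_points finite_points, of k d, where 'a='a]
  by (simp add: Ps_def card_cartesian_product card_points)

lemma flat_props:
  fixes a :: "nat \<Rightarrow> 'a::{finite,field}"
  assumes "(a, v) \<in> Ps k d"
  shows "flat a d v \<subseteq> points k" "card (flat a d v) = CARD('a) ^ d"
    "subsp (spanv d v)" "spanv d v \<subseteq> points k" "card (spanv d v) = CARD('a) ^ d"
    "flat a d v = transl a ` spanv d v"
proof -
  have v: "\<forall>j<d. v j \<in> points k" "lin_indep d v" using assms unfolding Ps_def indeps_def by auto
  show sp: "spanv d v \<subseteq> points k" using spanv_points v(1) by blast
  show cs: "card (spanv d v) = CARD('a) ^ d" using card_spanv[OF v(2)] .
  show "subsp (spanv d v)" by (rule subsp_spanv)
  show "flat a d v = transl a ` spanv d v" by (rule flat_image)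
  show "flat a d v \<subseteq> points k" unfolding flat_image using transl_points sp assms
    unfolding Ps_def by blast
  show "card (flat a d v) = CARD('a) ^ d" unfolding flat_image card_transl cs ..
qed

lemma fibre_lower:
  fixes a :: "nat \<Rightarrow> 'a::{finite,field}"
  assumes "(a, v) \<in> Ps k d"
  shows "flat a d v \<times> indeps (spanv d v) d \<subseteq> {p \<in> Ps k d. phi d p = flat a d v}"
proof clarify
  fix a' w assume a': "a' \<in> flat a d v" and w: "w \<in> indeps (spanv d v) d"
  note fp = flat_props[OF assms]
  have wj: "\<forall>j<d. w j \<in> spanv d v" "lin_indep d w" using w unfolding indeps_def by auto
  have "w \<in> indeps (points k) d" using w fp(4) unfolding indeps_def by blast
  moreover have "a' \<in> points k" using a' fp(1) by blast
  moreover have "flat a' d w = flat a d v"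
  proof -
    have sub: "spanv d w \<subseteq> spanv d v" using spanv_sub[OF fp(3)] wj(1) by blast
    have "card (spanv d w) = card (spanv d v)" using card_spanv[OF wj(2)] fp(5) by simp
    then have eq: "spanv d w = spanv d v" using card_subset_eq[OF finite_spanv sub] by simp
    obtain x0 where x0: "x0 \<in> spanv d v" "a' = transl a x0" using a' fp(6) by blast
    show ?thesis unfolding flat_image eq x0(2) translate[OF fp(3) x0(1)] ..
  qed
  ultimately show "(a', w) \<in> Ps k d \<and> phi d (a', w) = flat a d v"
    unfolding Ps_def phi_def by simp
qed


lemma count_flats:
  "card (Fs k d TYPE('a::{finite,field})) * (CARD('a) ^ d * (\<Prod>i<d. CARD('a) ^ d - CARD('a) ^ i))
     \<le> CARD('a) ^ k * (\<Prod>i<d. CARD('a) ^ k - CARD('a) ^ i)"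
proof -
  let ?P = "Ps k d :: ((nat \<Rightarrow> 'a) \<times> _) set"
  let ?F = "Fs k d TYPE('a)"
  let ?m = "CARD('a) ^ d * (\<Prod>i<d. CARD('a) ^ d - CARD('a) ^ i)"
  have finP: "finite ?P" using finite_card_Ps by blast
  have F: "?F = phi d ` ?P" by (rule Fs_eq)
  have finF: "finite ?F" unfolding F using finP by simp
  have Pun: "?P = (\<Union>A\<in>?F. {p \<in> ?P. phi d p = A})" unfolding F by auto
  have "card ?P = (\<Sum>A\<in>?F. card {p \<in> ?P. phi d p = A})"
    by (subst Pun, rule card_UN_disjoint) (use finF finP in auto)
  also have "\<dots> \<ge> (\<Sum>A\<in>?F. ?m)"
  proof (rule sum_mono)
    fix A assume "A \<in> ?F"
    then obtain a v where av: "(a, v) \<in> ?P" "A = flat a d v" unfolding F phi_def by auto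
    note fp = flat_props[OF av(1)]
    have ci: "card (indeps (spanv d v) d) = (\<Prod>i<d. CARD('a) ^ d - CARD('a) ^ i)"
      using finite_card_indeps[OF fp(3) finite_spanv, of d] fp(5) by simp
    have "?m = card (flat a d v \<times> indeps (spanv d v) d)"
      using ci fp(2) by (simp add: card_cartesian_product)
    also have "\<dots> \<le> card {p \<in> ?P. phi d p = A}"
      unfolding av(2) by (rule card_mono[OF _ fibre_lower[OF av(1)]]) (use finP in simp)
    finally show "?m \<le> card {p \<in> ?P. phi d p = A}" .
  qed
  finally have "card ?F * ?m \<le> card ?P" by simp
  then show ?thesis using finite_card_Ps[of k d, where 'a='a] by simp
qed


definition Pd :: "real \<Rightarrow> nat \<Rightarrow> real" where
  "Pd q d = (\<Prod>j<d. 1 - 1 / q ^ Suc j)"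

lemma prod_qd: fixes q :: real assumes "q > 0"
  shows "(\<Prod>i<d. q ^ d - q ^ i) = q ^ (d * d) * Pd q d"
proof -
  have "(\<Prod>i<d. q ^ d - q ^ i) = (\<Prod>i<d. q ^ d - q ^ (d - Suc i))"
    by (rule prod.nat_diff_reindex[symmetric])
  also have "\<dots> = (\<Prod>i<d. q ^ d * (1 - 1 / q ^ Suc i))"
  proof (rule prod.cong)
    fix i assume "i \<in> {..<d}"
    then have "d = (d - Suc i) + Suc i" by simp
    then have "q ^ d = q ^ ((d - Suc i) + Suc i)" by (rule arg_cong)
    then have "q ^ d = q ^ (d - Suc i) * q ^ Suc i" by (simp only: power_add)
    then show "q ^ d - q ^ (d - Suc i) = q ^ d * (1 - 1 / q ^ Suc i)"
      using assms by (simp add: field_simps)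
  qed simp
  also have "\<dots> = (q ^ d) ^ d * Pd q d" unfolding Pd_def by (simp add: prod.distrib)
  finally show ?thesis by (simp add: power_mult)
qed

lemma Pd_pos: "q \<ge> 2 \<Longrightarrow> Pd q d > 0"
  unfolding Pd_def
proof (intro prod_pos)
  fix j assume "q \<ge> 2"
  then have "1 < q ^ Suc j" by (intro one_less_power) auto
  then have "1 / q ^ Suc j < 1" by simp
  then show "0 < 1 - 1 / q ^ Suc j" by simp
qed

lemma Pd_two: "Pd 2 d \<ge> 1/4 + 1 / 2 ^ Suc d"
proof (induction d)
  case 0 then show ?case by (simp add: Pd_def)
next
  case (Suc d)
  show ?case
  proof (cases d)
    case 0 then show ?thesis by (simp add: Pd_def)
  next
    case (Suc d')
    define t :: real where "t = 1 / 2 ^ Suc d"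
    have t: "t > 0" "t \<le> 1/4" using Suc unfolding t_def by (auto simp: field_simps)
    have P: "Pd 2 (Suc d) = Pd 2 d * (1 - t)" unfolding Pd_def t_def by simp
    have IH: "Pd 2 d \<ge> 1/4 + t" using Suc.IH unfolding t_def .
    have "Pd 2 d * (1 - t) \<ge> (1/4 + t) * (1 - t)"
      using IH t by (intro mult_right_mono) auto
    moreover have "(1/4 + t) * (1 - t) \<ge> 1/4 + t / 2"
    proof -
      have h: "t * t \<le> t * (1/4)" using t by (intro mult_left_mono) auto
      have "(1/4 + t) * (1 - t) = 1/4 + 3 * t / 4 - t * t" by (simp add: field_simps)
      then show ?thesis using h by linarith
    qed
    ultimately show ?thesis using P unfolding t_def by simp
  qed
qed

lemma Pd_gen: assumes "q \<ge> 2" shows "Pd q d \<ge> (q - 2) / (q - 1) + 1 / ((q - 1) * q ^ d)"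
proof (induction d)
  case 0 then show ?case using assms by (simp add: Pd_def field_simps)
next
  case (Suc d)
  define t where "t = 1 / q ^ d"
  have q: "q > 1" using assms by simp
  have t: "t > 0" "t \<le> 1" using q unfolding t_def by auto
  have tq: "t / q \<le> 1" using t q by (simp add: field_simps)
  have P: "Pd q (Suc d) = Pd q d * (1 - t / q)" unfolding Pd_def t_def by simp
  have "t / (q - 1) = 1 / ((q - 1) * q ^ d)" unfolding t_def by simp
  then have IH: "Pd q d \<ge> (q - 2) / (q - 1) + t / (q - 1)" using Suc.IH by simp
  have "Pd q d * (1 - t / q) \<ge> ((q - 2) / (q - 1) + t / (q - 1)) * (1 - t / q)"
    using IH tq by (intro mult_right_mono) auto
  moreover have "((q - 2) / (q - 1) + t / (q - 1)) * (1 - t / q) \<ge> (q - 2) / (q - 1) + (t / q) / (q - 1)"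
  proof -
    have q1: "q - 1 \<noteq> 0" "q \<noteq> 0" "(q - 1) * q > 0" using q by auto
    have h1: "(q - 2) / (q - 1) + t / (q - 1) = (q - 2 + t) / (q - 1)" by (simp add: add_divide_distrib)
    have h2: "1 - t / q = (q - t) / q" using q1 by (simp add: diff_divide_distrib)
    have h3: "(q - 2 + t) / (q - 1) * ((q - t) / q) = ((q - 2 + t) * (q - t)) / ((q - 1) * q)" by simp
    have h4a: "(q - 2) / (q - 1) = ((q - 2) * q) / ((q - 1) * q)" using q1 by simp
    have h4b: "(t / q) / (q - 1) = t / ((q - 1) * q)" by (simp add: mult.commute)
    have h4: "(q - 2) / (q - 1) + (t / q) / (q - 1) = ((q - 2) * q + t) / ((q - 1) * q)"
      unfolding h4a h4b by (simp add: add_divide_distrib)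
    have h5: "(q - 2 + t) * (q - t) = ((q - 2) * q + t) + (t - t * t)" by (simp add: algebra_simps)
    have "t * t \<le> t * 1" using t by (intro mult_left_mono) auto
    then have "(q - 2) * q + t \<le> (q - 2 + t) * (q - t)" unfolding h5 by simp
    then have "((q - 2) * q + t) / ((q - 1) * q) \<le> ((q - 2 + t) * (q - t)) / ((q - 1) * q)"
      using q1 by (intro divide_right_mono) auto
    then show ?thesis unfolding h1 h2 h3 h4 .
  qed
  moreover have "1 / ((q - 1) * q ^ Suc d) = (t / q) / (q - 1)" unfolding t_def using q by simp
  ultimately show ?case using P by linarith
qed

lemma flats_bound:
  assumes "k = s + d"
  shows "real (card (Fs k d TYPE('a::{finite,field}))) * Pd (real CARD('a)) d
           \<le> real CARD('a) ^ (s + s * d)"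
proof -
  let ?q = "real CARD('a)"
  have q: "?q \<ge> 1" by simp
  have q0: "?q > 0" by simp
  have c: "real (card (Fs k d TYPE('a))) * (?q ^ d * (\<Prod>i<d. ?q ^ d - ?q ^ i))
     \<le> ?q ^ k * (\<Prod>i<d. ?q ^ k - ?q ^ i)"
  proof -
    have h: "real (card (Fs k d TYPE('a)) * (CARD('a) ^ d * (\<Prod>i<d. CARD('a) ^ d - CARD('a) ^ i)))
     \<le> real (CARD('a) ^ k * (\<Prod>i<d. CARD('a) ^ k - CARD('a) ^ i))"
      using count_flats[of k d, where 'a='a] by (simp only: of_nat_le_iff)
    have e1: "real (\<Prod>i<d. CARD('a) ^ d - CARD('a) ^ i) = (\<Prod>i<d. ?q ^ d - ?q ^ i)"
      unfolding of_nat_prod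
    proof (rule prod.cong)
      fix i assume "i \<in> {..<d}"
      then have "CARD('a) ^ i \<le> CARD('a) ^ d" by (intro power_increasing) auto
      then show "real (CARD('a) ^ d - CARD('a) ^ i) = ?q ^ d - ?q ^ i" by (simp add: of_nat_diff)
    qed simp
    have e2: "real (\<Prod>i<d. CARD('a) ^ k - CARD('a) ^ i) = (\<Prod>i<d. ?q ^ k - ?q ^ i)"
      unfolding of_nat_prod
    proof (rule prod.cong)
      fix i assume "i \<in> {..<d}"
      then have "CARD('a) ^ i \<le> CARD('a) ^ k" using assms by (intro power_increasing) auto
      then show "real (CARD('a) ^ k - CARD('a) ^ i) = ?q ^ k - ?q ^ i" by (simp add: of_nat_diff)
    qed simp
    show ?thesis using h unfolding of_nat_mult e1 e2 by simp
  qed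
  have p2: "(\<Prod>i<d. ?q ^ k - ?q ^ i) \<le> (\<Prod>i<d. ?q ^ k)"
  proof (rule prod_mono)
    fix i assume "i \<in> {..<d}"
    then have "?q ^ i \<le> ?q ^ k" using assms by (intro power_increasing) auto
    then show "0 \<le> ?q ^ k - ?q ^ i \<and> ?q ^ k - ?q ^ i \<le> ?q ^ k" by simp
  qed
  have "real (card (Fs k d TYPE('a))) * (?q ^ d * ?q ^ (d * d)) * Pd ?q d
      = real (card (Fs k d TYPE('a))) * (?q ^ d * (\<Prod>i<d. ?q ^ d - ?q ^ i))"
    using prod_qd[OF q0, of d] by simp
  also have "\<dots> \<le> ?q ^ k * (\<Prod>i<d. ?q ^ k - ?q ^ i)" by (rule c)
  also have "\<dots> \<le> ?q ^ k * ?q ^ (k * d)"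
    using p2 by (intro mult_left_mono) (auto simp: power_mult)
  also have "\<dots> = (?q ^ d * ?q ^ (d * d)) * ?q ^ (s + s * d)"
    unfolding assms by (simp flip: power_add add: algebra_simps)
  finally have "(?q ^ d * ?q ^ (d * d)) * (real (card (Fs k d TYPE('a))) * Pd ?q d)
     \<le> (?q ^ d * ?q ^ (d * d)) * ?q ^ (s + s * d)" by (simp add: algebra_simps)
  then show ?thesis using q0 by (simp add: mult_le_cancel_left_pos)
qed


lemma greedy:
  fixes Fs :: "'f set" and Ts :: "'t set" and miss :: "'f \<Rightarrow> 't \<Rightarrow> bool" and p :: real
  assumes fin: "finite Fs" "finite Ts" and ne: "Ts \<noteq> {}" and p: "p \<ge> 0"
    and bnd: "\<And>F. F \<in> Fs \<Longrightarrow> real (card {t\<in>Ts. miss F t}) \<le> p * real (card Ts)"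
  shows "\<exists>ts. length ts = m \<and> set ts \<subseteq> Ts \<and>
           real (card {F\<in>Fs. \<forall>t\<in>set ts. miss F t}) \<le> p ^ m * real (card Fs)"
proof (induction m)
  case 0
  show ?case by (intro exI[of _ "[]"]) simp
next
  case (Suc m)
  then obtain ts where ts: "length ts = m" "set ts \<subseteq> Ts"
    "real (card {F\<in>Fs. \<forall>t\<in>set ts. miss F t}) \<le> p ^ m * real (card Fs)" by blast
  define U where "U = {F\<in>Fs. \<forall>t\<in>set ts. miss F t}"
  have finU: "finite U" unfolding U_def using fin by simp
  have cnt: "real (card {x\<in>A. P x}) = (\<Sum>x\<in>A. of_bool (P x))" if "finite A" for A :: "'z set" and P
  proof -
    have "{x\<in>A. P x} = A \<inter> {x. P x}" by blast
    then show ?thesis using that by simp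
  qed
  have swap: "(\<Sum>t\<in>Ts. real (card {F\<in>U. miss F t})) = (\<Sum>F\<in>U. real (card {t\<in>Ts. miss F t}))"
    using cnt[OF finU] cnt[OF fin(2)] sum.swap[where g="\<lambda>F t. of_bool (miss F t) :: real" and A=U and B=Ts] by simp
  have "(\<Sum>F\<in>U. real (card {t\<in>Ts. miss F t})) \<le> (\<Sum>F\<in>U. p * real (card Ts))"
    using bnd unfolding U_def by (intro sum_mono) auto
  then have tot: "(\<Sum>t\<in>Ts. real (card {F\<in>U. miss F t})) \<le> real (card Ts) * (p * real (card U))"
    using swap by (simp add: algebra_simps)
  obtain t where t: "t \<in> Ts" "real (card {F\<in>U. miss F t}) \<le> p * real (card U)"
  proof (rule ccontr)
    assume "\<not> thesis"
    then have "\<forall>t\<in>Ts. p * real (card U) < real (card {F\<in>U. miss F t})"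
      using that by force
    then have "(\<Sum>t\<in>Ts. p * real (card U)) < (\<Sum>t\<in>Ts. real (card {F\<in>U. miss F t}))"
      using fin(2) ne by (intro sum_strict_mono) auto
    then show False using tot by simp
  qed
  have eq: "{F\<in>Fs. \<forall>t'\<in>set (t # ts). miss F t'} = {F\<in>U. miss F t}" unfolding U_def by auto
  have "real (card {F\<in>U. miss F t}) \<le> p * (p ^ m * real (card Fs))"
    using t(2) ts(3) p unfolding U_def by (meson mult_left_mono order_trans)
  then show ?case using ts t eq by (intro exI[of _ "t # ts"]) simp
qed

lemma plus_mem:
  "t \<in> lspan R us \<Longrightarrow> w \<in> R' \<Longrightarrow> subsp R' \<Longrightarrow> R \<subseteq> R' \<Longrightarrow> (\<lambda>i. w i + t i) \<in> lspan R' us"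
proof (induction us arbitrary: R R')
  case Nil then show ?case using subsp_add by auto
next
  case (Cons u us)
  have "(\<lambda>i. w i + t i) \<in> lspan (ext1 R' u) us"
    using Cons.prems ext1_sub[of R' u] subsp_ext1[OF Cons.prems(3)] ext1_mono[OF Cons.prems(4)]
    by (intro Cons.IH[of "ext1 R u" "ext1 R' u"]) auto
  then show ?case by simp
qed

lemma lspan_decomp:
  "z \<in> lspan S us \<Longrightarrow> \<exists>x\<in>S. \<exists>t\<in>lspan {(\<lambda>_. 0)} us. z = (\<lambda>i. x i + t i)"
proof (induction us arbitrary: S z)
  case Nil
  have "z = (\<lambda>i. z i + (\<lambda>_. 0) i)" by simp
  moreover have "(\<lambda>_. 0) \<in> lspan {(\<lambda>_. 0)} []" by simp
  ultimately show ?case using Nil by (metis lspan.simps(1))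
next
  case (Cons u us)
  have "\<exists>x'\<in>ext1 S u. \<exists>t\<in>lspan {(\<lambda>_. 0)} us. z = (\<lambda>i. x' i + t i)"
    using Cons.IH[of z "ext1 S u"] Cons.prems by simp
  then obtain x' t where x't: "x' \<in> ext1 S u" "t \<in> lspan {(\<lambda>_. 0)} us" "z = (\<lambda>i. x' i + t i)"
    by blast
  obtain x c where xc: "x \<in> S" "x' = (\<lambda>i. x i + c * u i)" using x't(1) unfolding ext1_def by blast
  have s0: "subsp {(\<lambda>_. 0) :: nat \<Rightarrow> 'a}" unfolding subsp_def by auto
  have w: "(\<lambda>i. c * u i) \<in> ext1 {(\<lambda>_. 0)} u" using ext1_I[of "\<lambda>_. 0" "{\<lambda>_. 0}" c u] by simp
  have "(\<lambda>i. c * u i + t i) \<in> lspan (ext1 {(\<lambda>_. 0)} u) us"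
    using plus_mem[OF x't(2) w subsp_ext1[OF s0] ext1_sub] .
  moreover have "z = (\<lambda>i. x i + (c * u i + t i))" using x't(3) xc(2) by (auto simp: add.assoc)
  ultimately show ?case using xc(1) by auto
qed


lemma bq_le:
  fixes F :: "'a::{finite,field} itself" and B :: "(nat \<Rightarrow> 'a) set"
  assumes "blocking_set k s B" shows "bq F k s \<le> card B"
proof -
  have fin: "finite {card B | B :: (nat \<Rightarrow> 'a) set. blocking_set k s B}"
    by (rule finite_subset[of _ "card ` Pow (points k :: (nat \<Rightarrow> 'a) set)"])
       (auto simp: blocking_set_def)
  show ?thesis using Min_le[OF fin] assms unfolding bq_def by blast
qed

lemma asd_Ps:
  fixes A :: "(nat \<Rightarrow> 'a::{finite,field}) set"
  assumes "affine_subspace_dim k d A"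
  shows "\<exists>a v. (a, v) \<in> Ps k d \<and> A = flat a d v"
proof -
  have "A \<in> Fs k d TYPE('a)" using assms unfolding Fs_def by simp
  then obtain p where p: "p \<in> Ps k d" "A = phi d p" unfolding Fs_eq by blast
  show ?thesis using p unfolding phi_def by (intro exI[of _ "fst p"] exI[of _ "snd p"]) simp
qed

lemma finite_Fs: "finite (Fs k d TYPE('a::{finite,field}))"
  unfolding Fs_eq using finite_card_Ps by blast

lemma pow_bound:
  fixes b r Y :: real
  assumes "b > 1" "r > 0" "real m * log b r \<ge> Y"
  shows "r ^ m \<ge> b powr Y"
proof -
  have "r ^ m = b powr (log b (r ^ m))" using assms by (simp add: powr_log_cancel)
  also have "log b (r ^ m) = real m * log b r" using assms by (simp add: log_nat_power)
  finally show ?thesis using assms by (simp add: powr_mono)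
qed


lemma part2:
  fixes F :: "'a::{finite,field} itself"
  assumes q2: "CARD('a) = 2" and s: "2 \<le> s" "s \<le> k"
  shows "real (bq F k s) \<le> real (s * (k - s) + s + 2) / log 2 (2 ^ s / (2 ^ s - 1)) + 1"
proof -
  define d where "d = k - s"
  have k: "k = s + d" unfolding d_def using s by simp
  let ?F = "Fs k d TYPE('a)"
  define X where "X = real (s * (k - s) + s + 2)"
  have X: "X = real (s + s * d) + 2" unfolding X_def d_def by simp
  define r :: real where "r = 2 ^ s / (2 ^ s - 1)"
  define L where "L = log 2 r"
  define p :: real where "p = 1 - 1 / 2 ^ s"
  have s1: "(2::real) ^ s > 1" using s by (simp add: one_less_power)
  have r1: "r > 1" unfolding r_def using s1 by (simp add: field_simps)
  have L0: "L > 0" unfolding L_def using r1 by simp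
  have pr: "p = 1 / r" unfolding p_def r_def using s1 by (simp add: field_simps)
  have p0: "p \<ge> 0" "p > 0" unfolding pr using r1 by auto
  define m where "m = nat \<lceil>X / L\<rceil>"
  have X0: "X \<ge> 0" unfolding X_def by simp
  have m1: "real m \<ge> X / L" unfolding m_def by linarith
  have XL: "X / L \<ge> 0" using X0 L0 by simp
  have "real m = of_int \<lceil>X / L\<rceil>" unfolding m_def using XL by simp
  then have m2: "real m \<le> X / L + 1" using of_int_ceiling_le_add_one[of "X / L"] by linarith
  have bnd: "real (card {t \<in> points k. t \<notin> A}) \<le> p * real (card (points k :: (nat \<Rightarrow> 'a) set))"
    if "A \<in> ?F" for A
  proof -
    have "affine_subspace_dim k d A" using that unfolding Fs_def by simp
    then obtain a v where av: "(a, v) \<in> Ps k d" "A = flat a d v"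
      using asd_Ps by blast
    note fp = flat_props[OF av(1)]
    have "{t \<in> points k. t \<notin> A} = points k - A" by blast
    then have "card {t \<in> points k. t \<notin> A} = 2 ^ k - 2 ^ d"
      using card_Diff_subset[OF finite_subset[OF fp(1) finite_points] fp(1)] fp(2) av(2) q2
      by (simp add: card_points)
    moreover have "(2::nat) ^ d \<le> 2 ^ k" using k by (intro power_increasing) auto
    ultimately have "real (card {t \<in> points k. t \<notin> A}) = 2 ^ k - 2 ^ d"
      by (simp add: of_nat_diff)
    also have "\<dots> = p * 2 ^ k" unfolding p_def k by (simp add: power_add field_simps)
    finally show ?thesis using q2 by (simp add: card_points)
  qed
  obtain ts where ts: "length ts = m" "set ts \<subseteq> points k"
    "real (card {A \<in> ?F. \<forall>t\<in>set ts. t \<notin> A}) \<le> p ^ m * real (card ?F)"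
  proof -
    have ne: "(points k :: (nat \<Rightarrow> 'a) set) \<noteq> {}"
    proof
      assume "(points k :: (nat \<Rightarrow> 'a) set) = {}"
      then have "card (points k :: (nat \<Rightarrow> 'a) set) = 0" by simp
      then show False unfolding card_points by simp
    qed
    show ?thesis
      using greedy[of ?F "points k :: (nat \<Rightarrow> 'a) set" p "\<lambda>A t. t \<notin> A" m, OF finite_Fs finite_points ne p0(1) bnd]
      that by blast
  qed
  have Pd: "Pd 2 d > 1/4"
  proof -
    have "(0::real) < 1 / 2 ^ Suc d" by simp
    then show ?thesis using Pd_two[of d] by linarith
  qed
  have fb: "real (card ?F) * Pd 2 d \<le> 2 ^ (s + s * d)" using flats_bound[OF k, where 'a='a] q2 by simp
  have Fl: "real (card ?F) < 2 powr X"
  proof -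
    have "real (card ?F) < 4 * 2 ^ (s + s * d)"
    proof (cases "card ?F = 0")
      case True then show ?thesis by simp
    next
      case False
      then have "real (card ?F) * (1/4) < real (card ?F) * Pd 2 d" using Pd by (intro mult_strict_left_mono) auto
      then show ?thesis using fb by simp
    qed
    also have "\<dots> = 2 powr X"
    proof -
      have "(2::real) powr X = 2 powr (real (s + s * d)) * 2 powr 2" unfolding X by (rule powr_add)
      also have "\<dots> = 2 ^ (s + s * d) * 4" by (simp only: powr_realpow) simp
      finally show ?thesis by simp
    qed
    finally show ?thesis .
  qed
  have rm: "r ^ m \<ge> 2 powr X"
    by (rule pow_bound) (use r1 m1 L0 in \<open>auto simp: L_def field_simps\<close>)
  have "p ^ m * real (card ?F) < 1"
  proof -
    have "p ^ m * real (card ?F) = real (card ?F) / r ^ m" unfolding pr by (simp add: power_divide)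
    also have "\<dots> < 1" using Fl rm r1 by (simp add: divide_less_eq)
    finally show ?thesis .
  qed
  then have "card {A \<in> ?F. \<forall>t\<in>set ts. t \<notin> A} = 0" using ts(3) by linarith
  then have U: "{A \<in> ?F. \<forall>t\<in>set ts. t \<notin> A} = {}" using finite_Fs[of k d, where 'a='a] by simp
  have "blocking_set k s (set ts)"
    unfolding blocking_set_def
  proof (intro conjI allI impI)
    show "set ts \<subseteq> points k" by (rule ts(2))
  next
    fix A :: "(nat \<Rightarrow> 'a) set" assume "affine_subspace_dim k (k - s) A"
    then have "A \<in> ?F" unfolding Fs_def d_def by simp
    then show "set ts \<inter> A \<noteq> {}" using U by blast
  qed
  then have "bq F k s \<le> card (set ts)" by (rule bq_le)
  also have "\<dots> \<le> m" using ts(1) card_length by metis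
  finally have "real (bq F k s) \<le> real m" by simp
  then show ?thesis using m2 unfolding X_def L_def r_def by simp
qed


lemma part3:
  fixes F :: "'a::{finite,field} itself"
  assumes q3: "CARD('a) \<ge> 3" and s: "2 \<le> s" "s \<le> k"
  shows "real (bq F k s) \<le> (real CARD('a) ^ s - 1) * real (s * (k - s) + s + 2)
            / log (real CARD('a)) (real CARD('a) ^ 4 / (real CARD('a) ^ 3 - real CARD('a) + 1)) + 1"
proof -
  define q where "q = real CARD('a)"
  have q3': "q \<ge> 3" unfolding q_def using q3 by simp
  define d where "d = k - s"
  have k: "k = s + d" unfolding d_def using s by simp
  let ?F = "Fs k d TYPE('a)"
  let ?T = "lists_k k s :: (nat \<Rightarrow> 'a) list set"
  let ?z = "(\<lambda>_. 0) :: nat \<Rightarrow> 'a"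
  define X where "X = real (s * (k - s) + s + 2)"
  have X: "X = real (s + s * d) + 2" unfolding X_def d_def by simp
  define c where "c = q ^ 3 - q + 1"
  have c0: "c > 0"
  proof -
    have "q ^ 1 \<le> q ^ 3" using q3' by (intro power_increasing) auto
    then show "c > 0" unfolding c_def by simp
  qed
  define r where "r = q ^ 4 / c"
  define p where "p = c / q ^ 4"
  have q0: "q > 1" using q3' by simp
  have r1: "r > 1"
  proof -
    have "q ^ 4 - c = (q - 1) * (q ^ 3 + 1)" unfolding c_def by (simp add: algebra_simps power_Suc eval_nat_numeral)
    moreover have "(q - 1) * (q ^ 3 + 1) > 0" using q0 by (simp add: add_pos_pos)
    ultimately have "q ^ 4 > c" by simp
    then show ?thesis unfolding r_def using c0 by simp
  qed
  have pr: "p = 1 / r" unfolding p_def r_def by simp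
  have p0: "p \<ge> 0" unfolding pr using r1 by simp
  define L where "L = log q r"
  have L0: "L > 0" unfolding L_def using r1 q0 by simp
  define m where "m = nat \<lfloor>X / L\<rfloor>"
  have X0: "X \<ge> 0" unfolding X_def by simp
  have XL: "X / L \<ge> 0" using X0 L0 by simp
  have mreal: "real m = of_int \<lfloor>X / L\<rfloor>" unfolding m_def using XL by simp
  have m1: "real m \<le> X / L" unfolding mreal by linarith
  have m2: "real m > X / L - 1" unfolding mreal by linarith
  have qa: "real CARD('a) = q" unfolding q_def ..
  have finT: "finite ?T" unfolding lists_k_def by (rule finite_lists_length_eq) simp
  have cardT: "card ?T = (CARD('a) ^ k) ^ s" unfolding lists_k_def
    using card_lists_length_eq[OF finite_points[of k, where 'a='a], of s] by (simp add: card_points)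
  have neT: "?T \<noteq> {}"
  proof -
    have "replicate s ?z \<in> ?T" unfolding lists_k_def points_def by auto
    then show ?thesis by blast
  qed
  have z_in: "?z \<in> lspan {?z} us" for us using lspan_sup[of "{?z}" us] by blast
  have bnd: "real (card {us \<in> ?T. A \<inter> lspan {?z} us = {}}) \<le> p * real (card ?T)"
    if "A \<in> ?F" for A
  proof -
    have "affine_subspace_dim k d A" using that unfolding Fs_def by simp
    then obtain a v where av: "(a, v) \<in> Ps k d" "A = flat a d v"
      using asd_Ps by blast
    note fp = flat_props[OF av(1)]
    define V where "V = spanv d v"
    have a_pt: "a \<in> points k" using av(1) unfolding Ps_def by simp
    have AV: "A = transl a ` V" unfolding av(2) V_def fp(6) ..
    show ?thesis
    proof (cases "a \<in> V")
      case True
      have "(\<lambda>i. - a i) \<in> V" using subsp_neg[OF fp(3) True[unfolded V_def]] unfolding V_def .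
      moreover have "transl a (\<lambda>i. - a i) = ?z" unfolding transl_def by simp
      ultimately have "?z \<in> A" unfolding AV by force
      then have e: "{us \<in> ?T. A \<inter> lspan {?z} us = {}} = {}" using z_in by blast
      show ?thesis unfolding e using p0 by simp
    next
      case False
      have sub: "{us \<in> ?T. A \<inter> lspan {?z} us = {}} \<subseteq> {us \<in> lists_k k s. a \<notin> lspan V us}"
      proof clarify
        fix us assume us: "us \<in> ?T" "A \<inter> lspan {?z} us = {}" and a: "a \<in> lspan V us"
        obtain x t where xt: "x \<in> V" "t \<in> lspan {?z} us" "a = (\<lambda>i. x i + t i)"
          using lspan_decomp[OF a] by blast
        have "(\<lambda>i. - x i) \<in> V" using subsp_neg[OF fp(3) xt(1)[unfolded V_def]] unfolding V_def .
        moreover have "transl a (\<lambda>i. - x i) = t" unfolding transl_def xt(3) by simp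
        ultimately have "t \<in> A" unfolding AV by force
        then show False using us(2) xt(2) by blast
      qed
      have fin2: "finite {us \<in> lists_k k s. a \<notin> lspan V us}" using finT by simp
      have cV: "card V * CARD('a) ^ s = CARD('a) ^ k"
        unfolding V_def fp(5) k by (simp add: power_add)
      have "real (card {us \<in> ?T. A \<inter> lspan {?z} us = {}}) \<le> real (card {us \<in> lists_k k s. a \<notin> lspan V us})"
        using card_mono[OF fin2 sub] by simp
      also have "\<dots> \<le> fr q s s * real (CARD('a) ^ k) ^ s"
        using miss_count[OF subsp_spanv[of d v, folded V_def] fp(4)[folded V_def] a_pt False cV, of s]
        unfolding qa .
      also have "\<dots> \<le> p * real (CARD('a) ^ k) ^ s"
        using fr_diag[of q s] q0 s unfolding p_def c_def by (intro mult_right_mono) auto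
      finally show ?thesis unfolding cardT by simp
    qed
  qed
  obtain ts where ts: "length ts = m" "set ts \<subseteq> ?T"
    "real (card {A \<in> ?F. \<forall>us\<in>set ts. A \<inter> lspan {?z} us = {}}) \<le> p ^ m * real (card ?F)"
    using greedy[of ?F ?T p "\<lambda>A us. A \<inter> lspan {?z} us = {}" m, OF finite_Fs finT neT p0 bnd]
      by blast
  have fb: "real (card ?F) * Pd q d \<le> q ^ (s + s * d)" using flats_bound[OF k, where 'a='a] unfolding qa .
  have Pdc: "Pd q d \<ge> q ^ 2 / c"
  proof -
    have "Pd q d \<ge> (q - 2) / (q - 1) + 1 / ((q - 1) * q ^ d)" using Pd_gen[of q d] q3' by simp
    moreover have "1 / ((q - 1) * q ^ d) \<ge> 0" using q0 by simp
    moreover have "(q - 2) / (q - 1) \<ge> q ^ 2 / c"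
    proof -
      have "q ^ 2 * (q - 1) \<le> (q - 2) * c"
      proof -
        have "(q - 2) * c - q ^ 2 * (q - 1) = q ^ 3 * (q - 3) + 3 * q - 2"
          unfolding c_def by (simp add: algebra_simps power_Suc eval_nat_numeral)
        moreover have "q ^ 3 * (q - 3) \<ge> 0" using q3' by simp
        ultimately show ?thesis using q3' by linarith
      qed
      then show ?thesis using c0 q0 by (simp add: divide_le_eq le_divide_eq mult.commute)
    qed
    ultimately show ?thesis by linarith
  qed
  have Fle: "real (card ?F) \<le> q ^ (s + s * d) * (c / q ^ 2)"
  proof -
    have "real (card ?F) * (q ^ 2 / c) \<le> real (card ?F) * Pd q d" using Pdc by (intro mult_left_mono) auto
    then have "real (card ?F) * (q ^ 2 / c) \<le> q ^ (s + s * d)" using fb by simp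
    then show ?thesis using c0 q0 by (simp add: field_simps)
  qed
  have qpL: "q powr L = r" unfolding L_def using q0 r1 by (simp add: powr_log_cancel)
  have qX: "q powr (X - L) = q ^ (s + s * d) * (c / q ^ 2)"
  proof -
    have "q powr (X - L) = q powr X / q powr L" by (rule powr_diff)
    also have "q powr X = q powr (real (s + s * d)) * q powr 2" unfolding X by (rule powr_add)
    also have "\<dots> = q ^ (s + s * d) * q ^ 2" using q0 by (simp only: powr_realpow) simp
    finally have e: "q powr (X - L) = q ^ (s + s * d) * q ^ 2 / (q ^ 4 / c)" unfolding qpL r_def .
    have q4: "q ^ 4 = q ^ 2 * q ^ 2" by (simp flip: power_add)
    have qn: "q ^ 2 \<noteq> 0" using q0 by simp
    show ?thesis unfolding e q4 using qn c0 by (simp add: field_simps)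
  qed
  have rm: "r ^ m \<ge> q powr (real m * L)"
    by (rule pow_bound) (use r1 q0 in \<open>auto simp: L_def\<close>)
  have "real m * L > X - L" using m2 L0 by (simp add: field_simps)
  then have "q powr (X - L) < q powr (real m * L)" using q0 by simp
  then have Flt: "real (card ?F) < r ^ m" using Fle qX rm by linarith
  have "p ^ m * real (card ?F) < 1"
  proof -
    have "p ^ m * real (card ?F) = real (card ?F) / r ^ m" unfolding pr by (simp add: power_divide)
    also have "\<dots> < 1" using Flt r1 by (simp add: divide_less_eq)
    finally show ?thesis .
  qed
  then have "card {A \<in> ?F. \<forall>us\<in>set ts. A \<inter> lspan {?z} us = {}} = 0" using ts(3) by linarith
  then have U: "{A \<in> ?F. \<forall>us\<in>set ts. A \<inter> lspan {?z} us = {}} = {}"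
    using finite_Fs[of k d, where 'a='a] by simp
  define B where "B = {?z} \<union> (\<Union>us\<in>set ts. lspan {?z} us - {?z})"
  have Bp: "B \<subseteq> points k"
  proof -
    have "lspan {?z} us \<subseteq> points k" if "us \<in> set ts" for us
      using that ts(2) unfolding lists_k_def by (intro lspan_points) (auto simp: points_def)
    moreover have "?z \<in> points k" unfolding points_def by simp
    ultimately show ?thesis unfolding B_def by blast
  qed
  have "blocking_set k s B"
    unfolding blocking_set_def
  proof (intro conjI allI impI)
    show "B \<subseteq> points k" by (rule Bp)
  next
    fix A :: "(nat \<Rightarrow> 'a) set" assume "affine_subspace_dim k (k - s) A"
    then have "A \<in> ?F" unfolding Fs_def d_def by simp
    then obtain us where "us \<in> set ts" "A \<inter> lspan {?z} us \<noteq> {}" using U by blast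
    then show "B \<inter> A \<noteq> {}" unfolding B_def by blast
  qed
  then have b1: "bq F k s \<le> card B" by (rule bq_le)
  have cl: "card (lspan {?z} us - {?z}) \<le> CARD('a) ^ s - 1" if "us \<in> set ts" for us
  proof -
    have "length us = s" using that ts(2) unfolding lists_k_def by auto
    then have "card (lspan {?z} us) \<le> CARD('a) ^ s" using card_lspan_le[of "{?z}" us] by simp
    then show ?thesis using z_in[of us] finite_lspan[of "{?z}" us] by (simp add: card_Diff_singleton)
  qed
  have "card B \<le> card {?z} + card (\<Union>us\<in>set ts. lspan {?z} us - {?z})"
    unfolding B_def by (rule card_Un_le)
  also have "card (\<Union>us\<in>set ts. lspan {?z} us - {?z}) \<le> (\<Sum>us\<in>set ts. card (lspan {?z} us - {?z}))"
    by (rule card_UN_le) simp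
  also have "\<dots> \<le> (\<Sum>us\<in>set ts. CARD('a) ^ s - 1)" by (rule sum_mono) (rule cl)
  also have "\<dots> = card (set ts) * (CARD('a) ^ s - 1)" by simp
  also have "\<dots> \<le> m * (CARD('a) ^ s - 1)" using card_length[of ts] ts(1) by (intro mult_right_mono) auto
  finally have "card B \<le> 1 + m * (CARD('a) ^ s - 1)" by simp
  then have "real (bq F k s) \<le> 1 + real m * (q ^ s - 1)"
    using b1 unfolding q_def
    by (smt (verit) of_nat_1 of_nat_add of_nat_diff of_nat_le_iff of_nat_mult of_nat_power one_le_power q0 q_def less_imp_le)
  also have "\<dots> \<le> 1 + X / L * (q ^ s - 1)"
  proof -
    have "q ^ s \<ge> 1" using q0 by simp
    then have "real m * (q ^ s - 1) \<le> X / L * (q ^ s - 1)" by (intro mult_right_mono[OF m1]) simp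
    then show ?thesis by simp
  qed
  finally show ?thesis unfolding X_def L_def r_def c_def q_def by (simp add: algebra_simps)
qed


theorem theorem1p1:
  fixes s k :: nat and F :: "'a::{finite,field} itself"
  assumes "2 \<le> s" and "s \<le> k"
  defines "q \<equiv> real CARD('a)"
  shows "(CARD('a) = 2 \<longrightarrow>
           real (bq F k s)
             \<le> real (s * (k - s) + s + 2) / log q (q ^ s / (q ^ s - 1)) + 1)
       \<and> (CARD('a) \<ge> 3 \<longrightarrow>
           real (bq F k s)
             \<le> (q ^ s - 1) * real (s * (k - s) + s + 2)
                  / log q (q ^ 4 / (q ^ 3 - q + 1)) + 1)"
proof (intro conjI impI)
  assume h: "CARD('a) = 2"
  then have "q = 2" unfolding q_def by simp
  then show "real (bq F k s) \<le> real (s * (k - s) + s + 2) / log q (q ^ s / (q ^ s - 1)) + 1"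
    using part2[OF h assms(1) assms(2), of F] by simp
next
  assume h: "CARD('a) \<ge> 3"
  show "real (bq F k s) \<le> (q ^ s - 1) * real (s * (k - s) + s + 2) / log q (q ^ 4 / (q ^ 3 - q + 1)) + 1"
    using part3[OF h assms(1) assms(2), of F] unfolding q_def .
qed

end
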